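(* Let $\omega=\frac{-1+\sqrt{-3}}{2}$, so that $-\omega$ is a primitive $6$-th root of unity, and let $\zeta_{12}$ be a primitive $12$-th root of unity. Then $$\{\operatorname{Tr}(M) : M\in G_q(-\omega)\}=\{0,\ c,\ \sqrt{3}\,\zeta_{12}\,c,\ 2c : c=(-\omega)^j,\ j=0,1,\dots,5\}.$$ In particular this set of traces is finite.
   Context: Let $q$ be a formal parameter and let $R_q=\begin{pmatrix} q & 1\\ 0 & 1\end{pmatrix}$, $S_q=\begin{pmatrix} 0 & -q^{-1}\\ 1 & 0\end{pmatrix}\in \mathrm{GL}(2,\mathbb{Z}[q,q^{-1}])$. Let $G_q=\langle R_q,S_q\rangle$ be the group they generate. For $\zeta\in\mathbb{C}^*$, set $G_q(\zeta)=\{M_q|_{q=\zeta} : M_q\in G_q\}\subset \mathrm{GL}(2,\mathbb{C})$. *)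

theory Defs
  imports "HOL-Analysis.Analysis"
begin

text \<open>A 2x2 matrix with entries in Z[q,q^-1] is represented by the function
  q \<mapsto> (its evaluation at q) :: complex^2^2.  A Laurent polynomial is determined
  by its values on the infinite set of nonzero complex numbers, and
  evaluation at q = zeta is just application to zeta.\<close>

definition mat2 :: "complex \<Rightarrow> complex \<Rightarrow> complex \<Rightarrow> complex \<Rightarrow> complex^2^2" where
  "mat2 a b c d = (\<chi> i j. if i = 1 then (if j = 1 then a else b)
                             else (if j = 1 then c else d))"

definition Rq :: "complex \<Rightarrow> complex^2^2" where
  "Rq q = mat2 q 1 0 1"

definition Sq :: "complex \<Rightarrow> complex^2^2" where
  "Sq q = mat2 0 (- inverse q) 1 0"

inductive_set Gq :: "(complex \<Rightarrow> complex^2^2) set" where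
  one: "(\<lambda>q. mat 1) \<in> Gq"
| mulR: "M \<in> Gq \<Longrightarrow> (\<lambda>q. M q ** Rq q) \<in> Gq"
| mulS: "M \<in> Gq \<Longrightarrow> (\<lambda>q. M q ** Sq q) \<in> Gq"
| mulRinv: "M \<in> Gq \<Longrightarrow> (\<lambda>q. M q ** matrix_inv (Rq q)) \<in> Gq"
| mulSinv: "M \<in> Gq \<Longrightarrow> (\<lambda>q. M q ** matrix_inv (Sq q)) \<in> Gq"

definition Gq_at :: "complex \<Rightarrow> (complex^2^2) set" where
  "Gq_at z = (\<lambda>M. M z) ` Gq"

definition tr2 :: "complex^2^2 \<Rightarrow> complex" where
  "tr2 A = A $ 1 $ 1 + A $ 2 $ 2"

definition omega :: complex where
  "omega = (-1 + \<i> * complex_of_real (sqrt 3)) / 2"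

end

theory Submission imports Defs begin

lemma mat2_nth: "mat2 a b c d $ 1 $ 1 = a" "mat2 a b c d $ 1 $ 2 = b"
  "mat2 a b c d $ 2 $ 1 = c" "mat2 a b c d $ 2 $ 2 = d"
  by (simp_all add: mat2_def)

lemma mat2_eq: "(A::complex^2^2) = mat2 (A$1$1) (A$1$2) (A$2$1) (A$2$2)"
  by (simp add: vec_eq_iff forall_2 mat2_nth)

lemma mat2_mult: "mat2 a b c d ** mat2 e f g h = mat2 (a*e+b*g) (a*f+b*h) (c*e+d*g) (c*f+d*h)"
  by (simp add: vec_eq_iff forall_2 mat2_nth matrix_matrix_mult_def sum_2)

lemma mat1_eq: "(mat 1 :: complex^2^2) = mat2 1 0 0 1"
  by (simp add: vec_eq_iff forall_2 mat2_nth mat_def)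

lemma matrix_inv_eq:
  fixes A B :: "complex^2^2"
  assumes "A ** B = mat 1" "B ** A = mat 1"
  shows "matrix_inv A = B"
proof -
  have ex: "\<exists>B'. A ** B' = mat 1 \<and> B' ** A = mat 1" using assms by blast
  have h: "A ** matrix_inv A = mat 1 \<and> matrix_inv A ** A = mat 1"
    unfolding matrix_inv_def by (rule someI_ex[OF ex])
  have "matrix_inv A = matrix_inv A ** (A ** B)" using assms by (simp add: matrix_mul_rid)
  also have "\<dots> = (matrix_inv A ** A) ** B" by (simp add: matrix_mul_assoc)
  also have "\<dots> = B" using h by (simp add: matrix_mul_lid)
  finally show ?thesis .
qed

lemma Rinv: "q \<noteq> 0 \<Longrightarrow> matrix_inv (Rq q) = mat2 (1/q) (-1/q) 0 1"
  by (rule matrix_inv_eq) (simp_all add: Rq_def mat2_mult mat1_eq field_simps)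

lemma Sinv: "q \<noteq> 0 \<Longrightarrow> matrix_inv (Sq q) = mat2 0 1 (-q) 0"
  by (rule matrix_inv_eq) (simp_all add: Sq_def mat2_mult mat1_eq field_simps)

definition q0 :: complex where "q0 = - omega"

lemma q0_sq: "q0^2 = q0 - 1"
proof -
  have "(complex_of_real (sqrt 3))^2 = 3"
    by (metis of_real_numeral of_real_power real_sqrt_pow2 zero_le_numeral)
  then show ?thesis unfolding q0_def omega_def
    by (simp add: power2_eq_square field_simps)
qed

lemma q0_nz: "q0 \<noteq> 0" using q0_sq by auto

lemma q0_facts: "q0*q0 = q0 - 1" "inverse q0 = 1 - q0" "q0^4 = -q0" "q0^5 = 1 - q0" "q0^2 = q0 - 1"
  "q0^3 = -1" "q0^6 = 1"
proof -
  show q2: "q0*q0 = q0 - 1" using q0_sq by (simp add: power2_eq_square)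
  show "inverse q0 = 1 - q0" using q0_sq q0_nz by (simp add: field_simps power2_eq_square)
  show "q0^4 = -q0" using q2 by algebra
  show "q0^5 = 1 - q0" using q2 by algebra
  show "q0^2 = q0 - 1" by (rule q0_sq)
  show "q0^3 = -1" using q2 by algebra
  show "q0^6 = 1" using q2 by algebra
qed

lemmas q0_6 = q0_facts(7)

definition Pinv :: "complex \<Rightarrow> complex \<Rightarrow> complex^2^2 \<Rightarrow> bool" where
  "Pinv a b A \<longleftrightarrow> A$1$1 + A$1$2*(1-q0) = a \<and> A$2$1 + A$2$2*(1-q0) = a*(1-q0)
     \<and> A$1$1*A$2$2 - A$1$2*A$2$1 = a*b"

lemma Pinv_tr: assumes "Pinv a b A" "a \<noteq> 0" shows "tr2 A = a + b"
proof -
  obtain x y z w where A: "A = mat2 x y z w" using mat2_eq by blast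
  have e1: "x = a - y*(1-q0)" and e2: "z = a*(1-q0) - w*(1-q0)" and e3: "x*w - y*z = a*b"
    using assms unfolding Pinv_def A mat2_nth by (auto simp: algebra_simps)
  have "a*(x+w) = a*(a+b)" using e3 unfolding e1 e2 by (simp add: algebra_simps power2_eq_square)
  then show ?thesis using assms(2) by (simp add: tr2_def A mat2_nth)
qed

lemma Pinv_R: assumes "Pinv a b A" shows "Pinv a (b*q0) (A ** Rq q0)"
proof -
  obtain x y z w where A: "A = mat2 x y z w" using mat2_eq by blast
  have e1: "x = a - y*(1-q0)" and e2: "z = a*(1-q0) - w*(1-q0)" and e3: "x*w - y*z = a*b"
    using assms unfolding Pinv_def A mat2_nth by (auto simp: algebra_simps)
  show ?thesis unfolding A Rq_def mat2_mult Pinv_def mat2_nth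
    by (intro conjI) (use e1 e2 e3 q0_facts(1) in algebra)+
qed

lemma Pinv_S: assumes "Pinv a b A" shows "Pinv (a*q0) (b*q0^4) (A ** Sq q0)"
proof -
  obtain x y z w where A: "A = mat2 x y z w" using mat2_eq by blast
  have e1: "x = a - y*(1-q0)" and e2: "z = a*(1-q0) - w*(1-q0)" and e3: "x*w - y*z = a*b"
    using assms unfolding Pinv_def A mat2_nth by (auto simp: algebra_simps)
  show ?thesis unfolding A Sq_def mat2_mult Pinv_def mat2_nth q0_facts(2)
    by (intro conjI) (use e1 e2 e3 q0_facts(1) in algebra)+
qed



lemma Pinv_Ri: assumes "Pinv a b A" shows "Pinv a (b*q0^5) (A ** matrix_inv (Rq q0))"
proof -
  obtain x y z w where A: "A = mat2 x y z w" using mat2_eq by blast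
  have e1: "x = a - y*(1-q0)" and e2: "z = a*(1-q0) - w*(1-q0)" and e3: "x*w - y*z = a*b"
    using assms unfolding Pinv_def A mat2_nth by (auto simp: algebra_simps)
  show ?thesis unfolding A Rinv[OF q0_nz] mat2_mult Pinv_def mat2_nth divide_inverse q0_facts(2)
    by (intro conjI) (use e1 e2 e3 q0_facts(1) in algebra)+
qed

lemma Pinv_Si: assumes "Pinv a b A" shows "Pinv (a*q0^5) (b*q0^2) (A ** matrix_inv (Sq q0))"
proof -
  obtain x y z w where A: "A = mat2 x y z w" using mat2_eq by blast
  have e1: "x = a - y*(1-q0)" and e2: "z = a*(1-q0) - w*(1-q0)" and e3: "x*w - y*z = a*b"
    using assms unfolding Pinv_def A mat2_nth by (auto simp: algebra_simps)
  show ?thesis unfolding A Sinv[OF q0_nz] mat2_mult Pinv_def mat2_nth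
    by (intro conjI) (use e1 e2 e3 q0_facts(1) in algebra)+
qed

lemma Pinv_1: "Pinv 1 1 (mat 1)"
  by (simp add: Pinv_def mat1_eq mat2_nth)

lemma Gq_inv: "M \<in> Gq \<Longrightarrow> \<exists>m k::nat. Pinv (q0^m) (q0^k) (M q0)"
proof (induction rule: Gq.induct)
  case one
  then show ?case using Pinv_1 by (metis power_0)
next
  case (mulR M)
  then obtain m k where "Pinv (q0^m) (q0^k) (M q0)" by blast
  from Pinv_R[OF this] show ?case by (metis power_Suc2)
next
  case (mulS M)
  then obtain m k where "Pinv (q0^m) (q0^k) (M q0)" by blast
  from Pinv_S[OF this] show ?case by (metis power_Suc2 power_add)
next
  case (mulRinv M)
  then obtain m k where "Pinv (q0^m) (q0^k) (M q0)" by blast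
  from Pinv_Ri[OF this] show ?case by (metis power_add)
next
  case (mulSinv M)
  then obtain m k where "Pinv (q0^m) (q0^k) (M q0)" by blast
  from Pinv_Si[OF this] show ?case by (metis power_add)
qed

primrec WR :: "nat \<Rightarrow> complex \<Rightarrow> complex^2^2" where
  "WR 0 = (\<lambda>q. mat 1)"
| "WR (Suc n) = (\<lambda>q. WR n q ** Rq q)"

primrec WS :: "nat \<Rightarrow> nat \<Rightarrow> complex \<Rightarrow> complex^2^2" where
  "WS n 0 = WR n"
| "WS n (Suc m) = (\<lambda>q. WS n m q ** Sq q)"

lemma WS_Gq: "WS n m \<in> Gq"
proof -
  have "WR n \<in> Gq" by (induction n) (auto intro: Gq.intros)
  then show ?thesis by (induction m) (auto intro: Gq.intros)
qed

lemma WS_P: "Pinv (q0^m) (q0^(n+4*m)) (WS n m q0)"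
proof -
  have r: "Pinv 1 (q0^n) (WR n q0)"
    by (induction n) (auto simp: Pinv_1 intro: Pinv_R[THEN back_subst[where P="\<lambda>b. Pinv _ b _"]])
  show ?thesis
  proof (induction m)
    case 0 then show ?case using r by simp
  next
    case (Suc m) from Pinv_S[OF this] show ?case by (simp add: power_add power_mult_distrib algebra_simps)
  qed
qed

lemma traces: "tr2 ` Gq_at q0 = {t. \<exists>m k::nat. t = q0^m + q0^k}"
proof
  show "tr2 ` Gq_at q0 \<subseteq> {t. \<exists>m k::nat. t = q0^m + q0^k}"
    unfolding Gq_at_def using Gq_inv Pinv_tr q0_nz by fastforce
next
  show "{t. \<exists>m k::nat. t = q0^m + q0^k} \<subseteq> tr2 ` Gq_at q0"
  proof safe
    fix m k :: nat
    define n where "n = k + 2*m"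
    have "q0^(n + 4*m) = q0^k * (q0^6)^m" unfolding n_def by (simp add: power_add power_mult[symmetric])
    then have "tr2 (WS n m q0) = q0^m + q0^k" using WS_P Pinv_tr q0_nz q0_6 by (metis mult_1_right power_one power_not_zero)
    moreover have "WS n m q0 \<in> Gq_at q0" unfolding Gq_at_def using WS_Gq by blast
    ultimately show "q0^m + q0^k \<in> tr2 ` Gq_at q0" by (metis image_eqI)
  qed
qed


lemma qmod: "q0^n = q0^(n mod 6)"
proof -
  have "q0^n = q0^(6*(n div 6) + n mod 6)" by simp
  also have "\<dots> = (q0^6)^(n div 6) * q0^(n mod 6)" by (simp only: power_add power_mult)
  finally show ?thesis using q0_6 by simp
qed

lemma sqrt3c: "(complex_of_real (sqrt 3))^2 = 3"
  by (metis of_real_numeral of_real_power real_sqrt_pow2 zero_le_numeral)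

lemma z12_form:
  fixes z12 :: complex
  assumes "z12 ^ 12 = 1" and "\<forall>k::nat. 0 < k \<and> k < 12 \<longrightarrow> z12 ^ k \<noteq> 1"
  shows "\<exists>e::nat. complex_of_real (sqrt 3) * z12 = (1+q0)*q0^e"
proof -
  define y where "y = z12^2"
  define s where "s = complex_of_real (sqrt 3) * z12"
  have y6: "y^6 = 1" using assms(1) unfolding y_def by (simp add: power_mult[symmetric])
  have y3: "y^3 \<noteq> 1" using assms(2)[rule_format, of 6] unfolding y_def by (simp add: power_mult[symmetric])
  have y2: "y^2 \<noteq> 1" using assms(2)[rule_format, of 4] unfolding y_def by (simp add: power_mult[symmetric])
  have "(y^3 - 1) * (y^3 + 1) = 0" using y6 by algebra
  then have "y^3 + 1 = 0" using y3 by simp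
  then have "(y + 1) * ((y - q0) * (y - (1 - q0))) = 0" using q0_facts(1) by algebra
  then have "y + 1 = 0 \<or> y - q0 = 0 \<or> y - (1 - q0) = 0" by (simp only: mult_eq_0_iff)
  then have "y = -1 \<or> y = q0 \<or> y = 1 - q0" by (auto simp: eq_neg_iff_add_eq_0)
  moreover have "y \<noteq> -1" using y2 by auto
  ultimately have yc: "y = q0 \<or> y = 1 - q0" by blast
  have s2: "s^2 = 3*y" unfolding s_def y_def using sqrt3c by (simp add: power_mult_distrib)
  show ?thesis
  proof (cases "y = q0")
    case True
    have "(1+q0)^2 = 3*q0" using q0_facts(1) by algebra
    then have "s^2 = (1+q0)^2" using s2 True by simp
    then have "s = (1+q0) \<or> s = -(1+q0)" using power2_eq_iff by blast
    moreover have "-(1+q0) = (1+q0)*q0^3" using q0_facts(6) by simp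
    ultimately show ?thesis unfolding s_def by (metis mult_1_right power_0)
  next
    case False
    then have "y = 1 - q0" using yc by blast
    have "((1+q0)*q0^2)^2 = 3*(1-q0)" using q0_facts(1) by algebra
    then have "s^2 = ((1+q0)*q0^2)^2" using s2 \<open>y = 1 - q0\<close> by simp
    then have "s = (1+q0)*q0^2 \<or> s = -((1+q0)*q0^2)" using power2_eq_iff by blast
    moreover have "-((1+q0)*q0^2) = (1+q0)*q0^5" using q0_facts(1) by algebra
    ultimately show ?thesis unfolding s_def by metis
  qed
qed

lemma atom1: "X*Y = (1::complex) \<Longrightarrow> (1+q)*X*(Z*Y) = Z + Z*q^1" by algebra
lemma atom2: "X*Y = (1::complex) \<Longrightarrow> W = 1 - q \<Longrightarrow> q*q = q - 1 \<Longrightarrow> (1+q)*X*(Z*W*Y) = Z + Z*W" by algebra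

lemma target_eq:
  fixes s :: complex and e :: nat
  assumes se: "s = (1+q0)*q0^e"
  shows "{t. \<exists>m k::nat. t = q0^m + q0^k} =
    {t. \<exists>j::nat\<in>{0..5}. let c = q0 ^ j in t = 0 \<or> t = c \<or> t = s * c \<or> t = 2 * c}"
proof safe
  fix m k :: nat
  define d where "d = (k + 5*m) mod 6"
  have "q0^k = q0^(k + 6*m)" using q0_6 by (simp add: power_add power_mult)
  also have "\<dots> = q0^(m + (k+5*m))" by (simp add: algebra_simps)
  also have "\<dots> = q0^m * q0^d" unfolding d_def by (metis power_add qmod)
  finally have kd: "q0^k = q0^m * q0^d" .
  have d6: "d < 6" unfolding d_def by simp
  have e6: "q0^(6*e) = 1" using q0_6 by (simp add: power_mult)
  have e6': "q0^e * q0^(5*e) = 1" using e6 by (simp flip: power_add)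
  have "\<exists>j::nat. j \<le> 5 \<and> (q0^m + q0^k = 0 \<or> q0^m + q0^k = q0^j \<or> q0^m + q0^k = s * q0^j \<or> q0^m + q0^k = 2 * q0^j)"
  proof -
    consider "d = 0" | "d = 1" | "d = 2" | "d = 3" | "d = 4" | "d = 5" using d6 by linarith
    then show ?thesis
    proof cases
      case 1
      then have "q0^m + q0^k = 2 * q0^(m mod 6)" using kd qmod[of m] by simp
      moreover have "m mod 6 \<le> 5" by simp
      ultimately show ?thesis by blast
    next
      case 2
      have "s * q0^((m + 5*e) mod 6) = s * q0^(m + 5*e)" by (simp only: qmod[of "m+5*e", symmetric])
      also have "\<dots> = q0^m + q0^k" unfolding se power_add kd 2 using atom1[OF e6'] by simp
      finally have "s * q0^((m + 5*e) mod 6) = q0^m + q0^k" .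
      moreover have "(m + 5*e) mod 6 \<le> 5" by simp
      ultimately show ?thesis by metis
    next
      case 3
      have "q0^m + q0^k = q0^(m+1)" using kd 3 q0_facts(5) by (simp add: algebra_simps)
      also have "\<dots> = q0^((m+1) mod 6)" by (rule qmod)
      finally have "q0^m + q0^k = q0^((m+1) mod 6)" .
      moreover have "(m+1) mod 6 \<le> 5" by simp
      ultimately show ?thesis by metis
    next
      case 4
      have "q0^m + q0^k = 0" using kd 4 q0_facts(6) by (simp add: algebra_simps)
      then show ?thesis by auto
    next
      case 5
      have "q0^m + q0^k = q0^m*(1-q0)" using kd 5 q0_facts(3) by (simp add: algebra_simps)
      also have "\<dots> = q0^(m+5)" by (simp only: power_add q0_facts(4))
      also have "\<dots> = q0^((m+5) mod 6)" by (rule qmod)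
      finally have "q0^m + q0^k = q0^((m+5) mod 6)" .
      moreover have "(m+5) mod 6 \<le> 5" by simp
      ultimately show ?thesis by metis
    next
      case 6
      have "s * q0^((m + 5 + 5*e) mod 6) = s * q0^(m + 5 + 5*e)" by (simp only: qmod[of "m+5+5*e", symmetric])
      also have "\<dots> = q0^m + q0^k" unfolding se power_add kd 6 using atom2[OF e6' q0_facts(4) q0_facts(1)] by simp
      finally have "s * q0^((m + 5 + 5*e) mod 6) = q0^m + q0^k" .
      moreover have "(m + 5 + 5*e) mod 6 \<le> 5" by simp
      ultimately show ?thesis by metis
    qed
  qed
  then show "\<exists>j::nat\<in>{0..5}. let c = q0 ^ j in q0^m + q0^k = 0 \<or> q0^m + q0^k = c \<or> q0^m + q0^k = s * c \<or> q0^m + q0^k = 2 * c"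
    by (auto simp: Let_def)
next
  fix t :: complex and j :: nat
  assume "j \<in> {0..5}" "let c = q0 ^ j in t = 0 \<or> t = c \<or> t = s * c \<or> t = 2 * c"
  then have "t = 0 \<or> t = q0^j \<or> t = s * q0^j \<or> t = 2 * q0^j" by (simp add: Let_def)
  moreover have "0 = q0^0 + q0^3" using q0_facts(6) by simp
  moreover have "q0^j = q0^(j+1) + q0^(j+5)" unfolding power_add q0_facts(4) by (simp add: algebra_simps)
  moreover have "s * q0^j = q0^(e+j) + q0^(e+j+1)" unfolding se by (simp add: power_add algebra_simps)
  moreover have "2 * q0^j = q0^j + q0^j" by simp
  ultimately show "\<exists>m k::nat. t = q0^m + q0^k" by metis
qed

lemma fin: "finite {t. \<exists>m k::nat. t = q0^m + q0^k}"
proof (rule finite_subset)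
  show "{t. \<exists>m k::nat. t = q0^m + q0^k} \<subseteq> (\<lambda>(m,k). q0^m + q0^k) ` ({..<6::nat} \<times> {..<6::nat})"
  proof safe
    fix m k :: nat
    have "q0^m + q0^k = (\<lambda>(m,k). q0^m + q0^k) (m mod 6, k mod 6)" using qmod by simp
    then show "q0^m + q0^k \<in> (\<lambda>(m,k). q0^m + q0^k) ` ({..<6::nat} \<times> {..<6::nat})" by force
  qed
qed auto

theorem theorem1p3:
  fixes z12 :: complex
  assumes "z12 ^ 12 = 1" and "\<forall>k::nat. 0 < k \<and> k < 12 \<longrightarrow> z12 ^ k \<noteq> 1"
  shows "tr2 ` Gq_at (- omega) =
           {t. \<exists>j::nat\<in>{0..5}. let c = (- omega) ^ j in
                 t = 0 \<or> t = c \<or> t = complex_of_real (sqrt 3) * z12 * c \<or> t = 2 * c}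
         \<and> finite (tr2 ` Gq_at (- omega))"
proof -
  obtain e where e: "complex_of_real (sqrt 3) * z12 = (1+q0)*q0^e" using z12_form[OF assms] by blast
  show ?thesis using traces target_eq[OF e] fin unfolding q0_def by simp
qed

end
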